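(* Let $s\in L^1_{\mathrm{loc}}(\mathbb{R})$ be supported in $[0,\infty)$ and let $a,b$ be constants. Suppose there exist $A,B>0$ such that $s(x)+A\log x$ is non-decreasing on $[B,\infty)$, and that the distributional derivative $s'$ satisfies, as $\lambda\to\infty$, $$s'(\lambda x)=a\frac{\delta(x)}{\lambda}+b\frac{\log\lambda}{\lambda}\delta(x)+\frac{b}{\lambda}\operatorname{Pf}\left(\frac{H(x)}{x}\right)+o\left(\frac{1}{\lambda}\right)\quad\text{in }\mathcal{S}'(\mathbb{R}).$$ Then $\lim_{x\to\infty}\left(s(x)-b\log x\right)=a$.
   Context: $\delta$ is the Dirac delta and $H$ the Heaviside function. $\langle \operatorname{Pf}(H(x)/x),\phi\rangle=\int_0^1\frac{\phi(x)-\phi(0)}{x}\,dx+\int_1^\infty\frac{\phi(x)}{x}\,dx$. For a distribution $g$, $g(\lambda x)$ is the distribution $\phi\mapsto \lambda^{-1}\langle g(x),\phi(x/\lambda)\rangle$. The asymptotic relation in $\mathcal{S}'(\mathbb{R})$ means that it holds after pairing both sides with any $\phi\in\mathcal{S}(\mathbb{R})$. *)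

theory Defs
  imports "HOL-Analysis.Analysis"
begin

definition schwartz :: "(real \<Rightarrow> real) \<Rightarrow> bool" where
  "schwartz \<phi> \<longleftrightarrow>
     (\<forall>n x. ((deriv ^^ n) \<phi> has_real_derivative (deriv ^^ Suc n) \<phi> x) (at x)) \<and>
     (\<forall>m n. bounded (range (\<lambda>x. x ^ m * (deriv ^^ n) \<phi> x)))"

type_synonym distr = "(real \<Rightarrow> real) \<Rightarrow> real"

definition locally_integrable_fun :: "(real \<Rightarrow> real) \<Rightarrow> bool" where
  "locally_integrable_fun s \<longleftrightarrow> (\<forall>K. compact K \<longrightarrow> set_integrable lborel K s)"

definition distr_of :: "(real \<Rightarrow> real) \<Rightarrow> distr" where
  "distr_of s = (\<lambda>\<phi>. \<integral>x. s x * \<phi> x \<partial>lborel)"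

definition dderiv :: "distr \<Rightarrow> distr" where
  "dderiv T = (\<lambda>\<phi>. - T (deriv \<phi>))"

text \<open>Dilation: <g(lambda x), phi> = lambda^{-1} <g(x), phi(x/lambda)>.\<close>
definition dilate :: "distr \<Rightarrow> real \<Rightarrow> distr" where
  "dilate T l = (\<lambda>\<phi>. T (\<lambda>x. \<phi> (x / l)) / l)"

definition dirac :: distr where
  "dirac = (\<lambda>\<phi>. \<phi> 0)"

definition pf_H_over_x :: distr where
  "pf_H_over_x = (\<lambda>\<phi>. (LINT x:{0<..1}|lborel. (\<phi> x - \<phi> 0) / x) + (LINT x:{1..}|lborel. \<phi> x / x))"

end

theory Submission
  imports Defs "HOL-Real_Asymp.Real_Asymp" "HOL-Computational_Algebra.Polynomial"
begin


definition smooth :: "(real \<Rightarrow> real) \<Rightarrow> bool" where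
  "smooth f \<longleftrightarrow> (\<forall>n x. ((deriv ^^ n) f has_real_derivative (deriv ^^ Suc n) f x) (at x))"

definition G :: "nat \<Rightarrow> real \<Rightarrow> real" where
  "G m t = (if 0 < t then exp (-1/t) / t^m else 0)"

lemma G_nonneg: "G m t \<ge> 0"
  by (simp add: G_def)

lemma G_isCont: "isCont (G m) 0"
proof -
  have r: "(G m \<longlongrightarrow> 0) (at_right 0)"
  proof -
    have "((\<lambda>t::real. exp(-1/t) / t^m) \<longlongrightarrow> 0) (at_right 0)" by real_asymp
    moreover have "eventually (\<lambda>t. exp(-1/t) / t^m = G m t) (at_right 0)"
    proof -
      have "eventually (\<lambda>t::real. 0 < t) (at_right 0)" by (simp add: eventually_at_filter)
      then show ?thesis by eventually_elim (simp add: G_def)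
    qed
    ultimately show ?thesis by (rule Lim_transform_eventually)
  qed
  have l: "(G m \<longlongrightarrow> 0) (at_left 0)"
  proof -
    have "eventually (\<lambda>t::real. t < 0) (at_left 0)" by (simp add: eventually_at_filter)
    then have "eventually (\<lambda>t. 0 = G m t) (at_left (0::real))"
      by eventually_elim (simp add: G_def)
    then show ?thesis by (rule Lim_transform_eventually[OF tendsto_const])
  qed
  have "(G m \<longlongrightarrow> 0) (at 0)" using l r by (rule filterlim_split_at)
  then show ?thesis unfolding isCont_def by (simp add: G_def)
qed

definition F :: "real poly \<Rightarrow> real poly \<Rightarrow> nat \<Rightarrow> real \<Rightarrow> real" where
  "F Q P n x = poly P x * G n (poly Q x)"

definition Dp :: "real poly \<Rightarrow> real poly \<Rightarrow> nat \<Rightarrow> real poly" where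
  "Dp Q P n = pderiv P * Q^2 + P * pderiv Q - smult (of_nat n) (P * Q * pderiv Q)"

lemma F_deriv_pos:
  assumes q: "poly Q x > 0"
  shows "(F Q P n has_real_derivative F Q (Dp Q P n) (n+2) x) (at x)"
proof -
  let ?f = "\<lambda>y. poly P y * (exp (-1 / poly Q y) / poly Q y ^ n)"
  have eq: "\<And>y. y \<in> {y. poly Q y > 0} \<Longrightarrow> ?f y = F Q P n y"
    by (simp add: F_def G_def)
  have op: "open {y. poly Q y > 0}"
    by (rule open_Collect_less) (auto intro: continuous_intros)
  have d: "(?f has_real_derivative F Q (Dp Q P n) (n+2) x) (at x)"
    using q
    apply (intro derivative_eq_intros poly_DERIV refl)
    apply (simp_all add: F_def G_def Dp_def)
    apply (cases n)
     apply (simp_all add: field_simps power2_eq_square)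
    done
  show ?thesis
    using has_field_derivative_transform_within_open[OF d op _ eq] q by simp
qed

lemma F_deriv_neg:
  assumes q: "poly Q x < 0"
  shows "(F Q P n has_real_derivative F Q (Dp Q P n) (n+2) x) (at x)"
proof -
  have op: "open {y. poly Q y < 0}"
    by (rule open_Collect_less) (auto intro: continuous_intros)
  have eq: "\<And>y. y \<in> {y. poly Q y < 0} \<Longrightarrow> 0 = F Q P n y"
    by (simp add: F_def G_def)
  have "((\<lambda>y. 0) has_real_derivative 0) (at x)" by simp
  then have "(F Q P n has_real_derivative 0) (at x)"
    by (rule has_field_derivative_transform_within_open[OF _ op]) (use q eq in auto)
  then show ?thesis using q by (simp add: F_def G_def)
qed

lemma F_deriv_zero:
  assumes q: "poly Q x = 0"
  shows "(F Q P n has_real_derivative F Q (Dp Q P n) (n+2) x) (at x)"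
proof -
  define L where "L = \<bar>poly (pderiv Q) x\<bar> + 1"
  have Lpos: "L > 0" by (simp add: L_def)
  have "((\<lambda>y. (poly Q y - poly Q x) / (y - x)) \<longlongrightarrow> poly (pderiv Q) x) (at x)"
    using poly_DERIV[of Q x] by (simp add: has_field_derivative_iff)
  from tendsto_rabs[OF this]
  have "((\<lambda>y. \<bar>poly Q y / (y - x)\<bar>) \<longlongrightarrow> \<bar>poly (pderiv Q) x\<bar>) (at x)"
    using q by simp
  then have "eventually (\<lambda>y. \<bar>poly Q y / (y - x)\<bar> < L) (at x)"
    by (rule order_tendstoD) (simp add: L_def)
  moreover have "eventually (\<lambda>y. y \<noteq> x) (at x)" by (simp add: eventually_at_filter)
  ultimately have ev: "eventually (\<lambda>y. \<bar>poly Q y\<bar> \<le> L * \<bar>y - x\<bar> \<and> y \<noteq> x) (at x)"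
  proof eventually_elim
    case (elim y)
    then have "\<bar>poly Q y\<bar> / \<bar>y - x\<bar> < L" by (simp add: abs_divide)
    then show ?case using elim by (simp add: field_simps)
  qed
  have lim: "((\<lambda>y. L * \<bar>poly P y\<bar> * G (n+1) (poly Q y)) \<longlongrightarrow> L * \<bar>poly P x\<bar> * G (n+1) (poly Q x)) (at x)"
    by (intro tendsto_intros isCont_tendsto_compose[OF G_isCont[unfolded q[symmetric]]])
  then have lim0: "((\<lambda>y. L * \<bar>poly P y\<bar> * G (n+1) (poly Q y)) \<longlongrightarrow> 0) (at x)"
    using q by (simp add: G_def)
  have "((\<lambda>y. F Q P n y / (y - x)) \<longlongrightarrow> 0) (at x)"
  proof (rule Lim_null_comparison[OF _ lim0])
    show "eventually (\<lambda>y. norm (F Q P n y / (y - x)) \<le> L * \<bar>poly P y\<bar> * G (n+1) (poly Q y)) (at x)"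
      using ev
    proof eventually_elim
      case (elim y)
      show ?case
      proof (cases "poly Q y > 0")
        case False
        then show ?thesis by (simp add: F_def G_def)
      next
        case True
        let ?q = "poly Q y"
        have yx: "\<bar>y - x\<bar> > 0" using elim by simp
        have "norm (F Q P n y / (y - x)) = \<bar>poly P y\<bar> * (exp (-1/?q) / ?q^n) / \<bar>y - x\<bar>"
          using True by (simp add: F_def G_def abs_mult abs_divide)
        also have "\<dots> \<le> \<bar>poly P y\<bar> * (exp (-1/?q) / ?q^n) / (?q / L)"
          apply (rule divide_left_mono)
          using elim True Lpos by (auto simp: field_simps)
        also have "\<dots> = L * \<bar>poly P y\<bar> * G (n+1) ?q"
          using True Lpos by (simp add: G_def field_simps)
        finally show ?thesis .
      qed
    qed
  qed
  then have "(F Q P n has_real_derivative 0) (at x)"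
    using q by (simp add: has_field_derivative_iff F_def G_def)
  then show ?thesis using q by (simp add: F_def G_def)
qed

lemma F_deriv: "(F Q P n has_real_derivative F Q (Dp Q P n) (n+2) x) (at x)"
  using F_deriv_pos F_deriv_neg F_deriv_zero by (metis linorder_neqE_linordered_idom)

lemma F_deriv': "(F Q P n has_real_derivative F Q (Dp Q P n) (Suc (Suc n)) x) (at x)"
  using F_deriv[of Q P n x] by simp

fun itp :: "real poly \<Rightarrow> real poly \<Rightarrow> nat \<Rightarrow> real poly \<times> nat" where
  "itp Q P 0 = (P, 0)"
| "itp Q P (Suc k) = (Dp Q (fst (itp Q P k)) (snd (itp Q P k)), snd (itp Q P k) + 2)"

lemma F_derivs: "(deriv ^^ k) (F Q P 0) = F Q (fst (itp Q P k)) (snd (itp Q P k))"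
proof (induction k)
  case 0
  then show ?case by simp
next
  case (Suc k)
  show ?case
    by (simp add: Suc.IH) (rule ext, rule DERIV_imp_deriv, rule F_deriv')
qed

lemma smooth_F: "smooth (F Q P 0)"
  unfolding smooth_def
proof (intro allI)
  fix n x
  show "((deriv ^^ n) (F Q P 0) has_real_derivative (deriv ^^ Suc n) (F Q P 0) x) (at x)"
    unfolding F_derivs by (simp add: F_deriv')
qed



lemma smooth_derivs_lin:
  assumes f: "smooth f" and g: "smooth g"
  shows "(deriv ^^ n) (\<lambda>x. a * f x + b * g x) = (\<lambda>x. a * (deriv ^^ n) f x + b * (deriv ^^ n) g x)"
proof (induction n)
  case 0
  then show ?case by simp
next
  case (Suc n)
  have "deriv (\<lambda>x. a * (deriv ^^ n) f x + b * (deriv ^^ n) g x)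
        = (\<lambda>x. a * (deriv ^^ Suc n) f x + b * (deriv ^^ Suc n) g x)"
  proof
    fix x
    have "((\<lambda>x. a * (deriv ^^ n) f x + b * (deriv ^^ n) g x) has_real_derivative
          a * (deriv ^^ Suc n) f x + b * (deriv ^^ Suc n) g x) (at x)"
    proof -
      have hf: "((deriv ^^ n) f has_real_derivative (deriv ^^ Suc n) f x) (at x)"
        using f unfolding smooth_def by blast
      have hg: "((deriv ^^ n) g has_real_derivative (deriv ^^ Suc n) g x) (at x)"
        using g unfolding smooth_def by blast
      show ?thesis using DERIV_add[OF DERIV_cmult[OF hf, of a] DERIV_cmult[OF hg, of b]] by simp
    qed
    then show "deriv (\<lambda>x. a * (deriv ^^ n) f x + b * (deriv ^^ n) g x) x
        = a * (deriv ^^ Suc n) f x + b * (deriv ^^ Suc n) g x"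
      by (rule DERIV_imp_deriv)
  qed
  then show ?case by (simp add: Suc.IH)
qed

lemma smooth_lin:
  assumes f: "smooth f" and g: "smooth g"
  shows "smooth (\<lambda>x. a * f x + b * g x)"
  unfolding smooth_def smooth_derivs_lin[OF f g]
proof (intro allI)
  fix n x
  have hf: "((deriv ^^ n) f has_real_derivative (deriv ^^ Suc n) f x) (at x)"
    using f unfolding smooth_def by blast
  have hg: "((deriv ^^ n) g has_real_derivative (deriv ^^ Suc n) g x) (at x)"
    using g unfolding smooth_def by blast
  show "((\<lambda>x. a * (deriv ^^ n) f x + b * (deriv ^^ n) g x) has_real_derivative
          a * (deriv ^^ Suc n) f x + b * (deriv ^^ Suc n) g x) (at x)"
    using DERIV_add[OF DERIV_cmult[OF hf, of a] DERIV_cmult[OF hg, of b]] by simp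
qed

lemma smooth_antideriv:
  assumes k: "smooth k" and d: "\<And>x. (\<phi> has_real_derivative k x) (at x)"
  shows "smooth \<phi>"
proof -
  have dk: "deriv \<phi> = k" using d by (auto intro!: ext DERIV_imp_deriv)
  have s: "(deriv ^^ Suc n) \<phi> = (deriv ^^ n) k" for n
    by (simp only: funpow_Suc_right o_apply dk)
  show ?thesis unfolding smooth_def
  proof (intro allI)
    fix n x
    show "((deriv ^^ n) \<phi> has_real_derivative (deriv ^^ Suc n) \<phi> x) (at x)"
    proof (cases n)
      case 0
      then show ?thesis using d by (simp add: dk)
    next
      case (Suc m)
      show ?thesis unfolding Suc s using k unfolding smooth_def by blast
    qed
  qed
qed

lemma smooth_compact_schwartz:
  assumes f: "smooth f" and z: "\<And>x. R < \<bar>x\<bar> \<Longrightarrow> f x = 0"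
  shows "schwartz f"
proof -
  have zn: "(deriv ^^ n) f x = 0" if "R < \<bar>x\<bar>" for n x
    using that
  proof (induction n arbitrary: x)
    case 0
    then show ?case using z by simp
  next
    case (Suc n)
    have op: "open {y::real. R < \<bar>y\<bar>}"
      by (rule open_Collect_less) (auto intro: continuous_intros)
    have "((\<lambda>y. 0) has_real_derivative 0) (at x)" by simp
    then have "((deriv ^^ n) f has_real_derivative 0) (at x)"
      by (rule has_field_derivative_transform_within_open[OF _ op]) (use Suc in auto)
    moreover have "((deriv ^^ n) f has_real_derivative (deriv ^^ Suc n) f x) (at x)"
      using f unfolding smooth_def by blast
    ultimately show ?case by (rule DERIV_unique[symmetric])
  qed
  have bnd: "bounded (range (\<lambda>x. x ^ m * (deriv ^^ n) f x))" for m n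
  proof -
    let ?h = "\<lambda>x. x ^ m * (deriv ^^ n) f x"
    have c: "continuous_on UNIV ?h"
      using f unfolding smooth_def
      by (intro continuous_intros) (auto intro: DERIV_isCont continuous_at_imp_continuous_on)
    have "compact (?h ` {-\<bar>R\<bar>..\<bar>R\<bar>})"
      by (rule compact_continuous_image) (auto intro: continuous_on_subset[OF c])
    then have b: "bounded (insert 0 (?h ` {-\<bar>R\<bar>..\<bar>R\<bar>}))"
      by (auto dest: compact_imp_bounded)
    have "range ?h \<subseteq> insert 0 (?h ` {-\<bar>R\<bar>..\<bar>R\<bar>})"
    proof
      fix y assume "y \<in> range ?h"
      then obtain x where x: "y = ?h x" by auto
      show "y \<in> insert 0 (?h ` {-\<bar>R\<bar>..\<bar>R\<bar>})"
      proof (cases "R < \<bar>x\<bar>")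
        case True
        then show ?thesis using x zn by simp
      next
        case False
        then have "x \<in> {-\<bar>R\<bar>..\<bar>R\<bar>}" by auto
        then show ?thesis using x by blast
      qed
    qed
    then show ?thesis using b bounded_subset by blast
  qed
  show ?thesis unfolding schwartz_def
    using f bnd unfolding smooth_def by blast
qed



lemma smooth_isCont: "smooth f \<Longrightarrow> isCont f x"
  unfolding smooth_def using DERIV_isCont by (metis funpow_0)

definition Qcd :: "real \<Rightarrow> real \<Rightarrow> real poly" where
  "Qcd c d = [:-(c*d), c+d, -1:]"

lemma poly_Qcd: "poly (Qcd c d) x = (x - c) * (d - x)"
  by (simp add: Qcd_def algebra_simps)

definition psi :: "real \<Rightarrow> real \<Rightarrow> real \<Rightarrow> real" where
  "psi c d = F (Qcd c d) 1 0"

lemma psi_eq: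
  assumes "c < d"
  shows "psi c d x = (if c < x \<and> x < d then exp (-1/((x-c)*(d-x))) else 0)"
proof -
  have "0 < (x - c) * (d - x) \<longleftrightarrow> c < x \<and> x < d"
    using assms by (auto simp: zero_less_mult_iff)
  then show ?thesis by (simp add: psi_def F_def G_def poly_Qcd)
qed

lemma psi_zero: "c < d \<Longrightarrow> \<not> (c < x \<and> x < d) \<Longrightarrow> psi c d x = 0"
  by (simp add: psi_eq)

lemma psi_nonneg: "c < d \<Longrightarrow> 0 \<le> psi c d x"
  by (simp add: psi_eq)

lemma psi_le1: "c < d \<Longrightarrow> psi c d x \<le> 1"
proof -
  assume cd: "c < d"
  show ?thesis
  proof (cases "c < x \<and> x < d")
    case True
    then have "0 < (x-c)*(d-x)" by simp
    then have "-1/((x-c)*(d-x)) \<le> 0" by simp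
    then show ?thesis using True cd by (simp add: psi_eq)
  qed (use cd in \<open>simp add: psi_eq\<close>)
qed

lemma psi_smooth: "smooth (psi c d)"
  unfolding psi_def by (rule smooth_F)

lemma psi_isCont: "isCont (psi c d) x"
  by (rule smooth_isCont[OF psi_smooth])

lemma psi_cont_on: "continuous_on S (psi c d)"
  by (simp add: continuous_at_imp_continuous_on psi_isCont)

definition Phi :: "real \<Rightarrow> real \<Rightarrow> real \<Rightarrow> real" where
  "Phi c d x = integral {c-1..x} (psi c d)"

lemma psi_integrable: "psi c d integrable_on {a..b}"
  by (rule integrable_continuous_interval[OF psi_cont_on])

lemma Phi_lo:
  assumes cd: "c < d" and x: "x \<le> c"
  shows "Phi c d x = 0"
proof -
  have "integral {c-1..x} (psi c d) = integral {c-1..x} (\<lambda>_. 0)"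
    by (rule integral_cong) (use cd x in \<open>auto intro: psi_zero\<close>)
  then show ?thesis by (simp add: Phi_def)
qed

lemma Phi_hi:
  assumes cd: "c < d" and x: "d \<le> x"
  shows "Phi c d x = Phi c d d"
proof -
  have "integral {c-1..d} (psi c d) + integral {d..x} (psi c d) = integral {c-1..x} (psi c d)"
    by (rule Henstock_Kurzweil_Integration.integral_combine[OF _ _ psi_integrable]) (use cd x in auto)
  moreover have "integral {d..x} (psi c d) = integral {d..x} (\<lambda>_. 0)"
    by (rule integral_cong) (use cd x in \<open>auto intro: psi_zero\<close>)
  ultimately show ?thesis by (simp add: Phi_def)
qed

lemma Phi_nonneg: "c < d \<Longrightarrow> 0 \<le> Phi c d x"
  unfolding Phi_def by (rule Henstock_Kurzweil_Integration.integral_nonneg[OF psi_integrable]) (simp add: psi_nonneg)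

lemma Phi_le:
  assumes cd: "c < d"
  shows "Phi c d x \<le> Phi c d d"
proof (cases "d \<le> x")
  case True
  then show ?thesis using Phi_hi[OF cd True] by simp
next
  case False
  show ?thesis
  proof (cases "c - 1 \<le> x")
    case True
    have "integral {c-1..x} (psi c d) + integral {x..d} (psi c d) = integral {c-1..d} (psi c d)"
      by (rule Henstock_Kurzweil_Integration.integral_combine[OF _ _ psi_integrable]) (use cd True False in auto)
    moreover have "0 \<le> integral {x..d} (psi c d)"
      by (rule Henstock_Kurzweil_Integration.integral_nonneg[OF psi_integrable]) (simp add: psi_nonneg cd)
    ultimately show ?thesis by (simp add: Phi_def)
  next
    case False
    then have "Phi c d x = 0" by (simp add: Phi_def)
    then show ?thesis using Phi_nonneg[OF cd, of d] by simp
  qed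
qed

lemma Phi_deriv:
  assumes cd: "c < d"
  shows "(Phi c d has_real_derivative psi c d x) (at x)"
proof (cases "c - 1 < x")
  case True
  have "((\<lambda>x. integral {c-1..x} (psi c d)) has_real_derivative psi c d x) (at x within {c-1..x+1})"
    by (rule integral_has_real_derivative) (use True psi_cont_on in auto)
  then show ?thesis using True by (simp add: at_within_Icc_at Phi_def[abs_def])
next
  case False
  have op: "open {y. y < c}" by (simp add: open_Collect_less)
  have "((\<lambda>y. 0) has_real_derivative 0) (at x)" by simp
  then have "(Phi c d has_real_derivative 0) (at x)"
    by (rule has_field_derivative_transform_within_open[OF _ op])
       (use False cd Phi_lo[OF cd] in auto)
  then show ?thesis using False cd psi_zero by simp
qed

lemma Phi_pos:
  assumes cd: "c < d"
  shows "0 < Phi c d d"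
proof -
  define w where "w = (d - c) / 4"
  have w: "0 < w" using cd by (simp add: w_def)
  have "integral {c+w..d-w} (\<lambda>_. exp (-1/(w*w))) \<le> integral {c+w..d-w} (psi c d)"
  proof (rule integral_le)
    fix x assume x: "x \<in> {c+w..d-w}"
    then have cx: "c < x \<and> x < d" using w by auto
    have A: "w * w \<le> (x-c)*(d-x)" using x w by (intro mult_mono) auto
    have B: "0 < w * w" using w by simp
    have C: "1/((x-c)*(d-x)) \<le> 1/(w*w)" by (rule frac_le) (use A B in auto)
    have "exp (-1/(w*w)) \<le> exp (-1/((x-c)*(d-x)))" using C by simp
    then show "exp (-1/(w*w)) \<le> psi c d x" using cx cd by (simp add: psi_eq)
  qed (auto intro: psi_integrable)
  moreover have "integral {c+w..d-w} (psi c d) \<le> integral {c-1..d} (psi c d)"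
    by (rule integral_subset_le) (use w psi_nonneg[OF cd] in \<open>auto intro: psi_integrable\<close>)
  moreover have "0 < integral {c+w..d-w} (\<lambda>_. exp (-1/(w*w)))"
    using w cd by (simp add: w_def field_simps)
  ultimately show ?thesis by (simp add: Phi_def)
qed

lemma psi_lborel:
  assumes cd: "c < d"
  shows "integrable lborel (psi c d)" "(\<integral>x. psi c d x \<partial>lborel) = Phi c d d"
proof -
  have z: "psi c d x = 0" if "x \<notin> {c-1..d}" for x
    using psi_zero[OF cd] that by auto
  have eq: "(\<lambda>x. indicator {c-1..d} x *\<^sub>R psi c d x) = psi c d"
  proof (rule ext)
    fix x show "indicator {c-1..d} x *\<^sub>R psi c d x = psi c d x"
      by (cases "x \<in> {c-1..d}") (use z in auto)
  qed
  have si: "integrable lborel (\<lambda>x. indicator {c-1..d} x *\<^sub>R psi c d x)"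
    by (rule borel_integrable_compact) (auto intro: psi_cont_on)
  then show "integrable lborel (psi c d)" by (simp only: eq)
  have "set_lebesgue_integral lborel {c-1..d} (psi c d) = integral {c-1..d} (psi c d)"
    by (rule set_borel_integral_eq_integral) (use si in \<open>simp add: set_integrable_def\<close>)
  then show "(\<integral>x. psi c d x \<partial>lborel) = Phi c d d"
    using eq by (simp add: set_lebesgue_integral_def Phi_def)
qed



definition kk :: "real \<Rightarrow> real \<Rightarrow> real \<Rightarrow> real" where
  "kk c d x = (1 / Phi (-d) (-c) (-c)) * psi (-d) (-c) x + (- 1 / Phi c d d) * psi c d x"

definition phi :: "real \<Rightarrow> real \<Rightarrow> real \<Rightarrow> real" where
  "phi c d x = Phi (-d) (-c) x / Phi (-d) (-c) (-c) - Phi c d x / Phi c d d"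

lemma phi_deriv:
  assumes "c < d"
  shows "(phi c d has_real_derivative kk c d x) (at x)"
proof -
  have "(phi c d has_real_derivative psi (-d) (-c) x / Phi (-d) (-c) (-c) - psi c d x / Phi c d d) (at x)"
  proof -
    have d1: "(Phi (-d) (-c) has_real_derivative psi (-d) (-c) x) (at x)"
      by (rule Phi_deriv) (use assms in simp)
    have d2: "(Phi c d has_real_derivative psi c d x) (at x)"
      by (rule Phi_deriv) (use assms in simp)
    show ?thesis unfolding phi_def[abs_def] by (intro DERIV_diff DERIV_cdivide d1 d2)
  qed
  then show ?thesis by (simp add: kk_def)
qed

lemma kk_smooth: "smooth (kk c d)"
  unfolding kk_def[abs_def] by (intro smooth_lin psi_smooth)

lemma phi_smooth: "c < d \<Longrightarrow> smooth (phi c d)"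
  by (rule smooth_antideriv[OF kk_smooth phi_deriv])

lemma phi_pos_side:
  assumes cd: "0 < c" "c < d" and x: "0 \<le> x"
  shows "phi c d x = 1 - Phi c d x / Phi c d d"
proof -
  have "Phi (-d) (-c) x = Phi (-d) (-c) (-c)"
    by (rule Phi_hi) (use cd x in auto)
  moreover have "0 < Phi (-d) (-c) (-c)" by (rule Phi_pos) (use cd in auto)
  ultimately show ?thesis by (simp add: phi_def)
qed

lemma phi_zero_out:
  assumes cd: "0 < c" "c < d" and x: "d < \<bar>x\<bar>"
  shows "phi c d x = 0"
proof (cases "x \<ge> 0")
  case True
  have "Phi c d x = Phi c d d" by (rule Phi_hi) (use cd x True in auto)
  moreover have "0 < Phi c d d" by (rule Phi_pos) (use cd in auto)
  ultimately show ?thesis using phi_pos_side[OF cd True] by simp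
next
  case False
  have "Phi (-d) (-c) x = 0" by (rule Phi_lo) (use cd x False in auto)
  moreover have "Phi c d x = 0" by (rule Phi_lo) (use cd x False in auto)
  ultimately show ?thesis by (simp add: phi_def)
qed

lemma phi_schwartz:
  assumes cd: "0 < c" "c < d"
  shows "schwartz (phi c d)"
  by (rule smooth_compact_schwartz[OF phi_smooth[OF cd(2)], of d]) (use phi_zero_out[OF cd] in auto)

lemma phi_bounds:
  assumes cd: "0 < c" "c < d" and x: "0 \<le> x"
  shows "0 \<le> phi c d x" "phi c d x \<le> 1"
proof -
  have J: "0 < Phi c d d" by (rule Phi_pos) (use cd in auto)
  have "0 \<le> Phi c d x" "Phi c d x \<le> Phi c d d"
    using Phi_nonneg Phi_le cd by auto
  then have "0 \<le> Phi c d x / Phi c d d" "Phi c d x / Phi c d d \<le> 1"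
    using J by (auto simp: divide_le_eq_1)
  then show "0 \<le> phi c d x" "phi c d x \<le> 1"
    using phi_pos_side[OF cd x] by auto
qed

lemma phi_one:
  assumes cd: "0 < c" "c < d" and x: "0 \<le> x" "x \<le> c"
  shows "phi c d x = 1"
  using phi_pos_side[OF cd x(1)] Phi_lo[OF cd(2) x(2)] by simp

lemma phi_zero_hi:
  assumes cd: "0 < c" "c < d" and x: "d \<le> x"
  shows "phi c d x = 0"
proof -
  have "0 < Phi c d d" by (rule Phi_pos) (use cd in auto)
  then show ?thesis using phi_pos_side[OF cd] Phi_hi[OF cd(2) x] x cd by simp
qed

lemma kk_pos_side:
  assumes cd: "0 < c" "c < d" and y: "0 \<le> y"
  shows "kk c d y = - psi c d y / Phi c d d"
proof -
  have "psi (-d) (-c) y = 0" by (rule psi_zero) (use cd y in auto)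
  then show ?thesis by (simp add: kk_def)
qed



lemma phi_cont: "c < d \<Longrightarrow> continuous_on UNIV (phi c d)"
  using smooth_isCont[OF phi_smooth] by (simp add: continuous_at_imp_continuous_on)

lemma phi_meas: "c < d \<Longrightarrow> phi c d \<in> borel_measurable lborel"
  using borel_measurable_continuous_onI[OF phi_cont] by simp

lemma int_ind_const:
  fixes a b K :: real
  assumes "a \<le> b"
  shows "integrable lborel (\<lambda>x. indicator {a..b} x * K)"
    "(\<integral>x. indicator {a..b} x * K \<partial>lborel) = (b - a) * K"
proof -
  have si: "integrable lborel (\<lambda>x. indicator {a..b} x *\<^sub>R K)"
    using borel_integrable_compact[OF compact_Icc, of a b "\<lambda>_. K"] by (simp add: continuous_on_const)
  then show "integrable lborel (\<lambda>x. indicator {a..b} x * K)" by simp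
  have "set_lebesgue_integral lborel {a..b} (\<lambda>_. K) = integral {a..b} (\<lambda>_. K)"
    by (rule set_borel_integral_eq_integral) (use si in \<open>simp add: set_integrable_def\<close>)
  then show "(\<integral>x. indicator {a..b} x * K \<partial>lborel) = (b - a) * K"
    using assms by (simp add: set_lebesgue_integral_def)
qed

lemma pf_bounds:
  assumes c: "0 < c" "c \<le> 1" "c < d" "1 \<le> d"
  shows "-((1-c)/c) \<le> pf_H_over_x (phi c d)" "pf_H_over_x (phi c d) \<le> d - 1"
proof -
  have p0: "phi c d 0 = 1" by (rule phi_one) (use c in auto)
  define f1 where "f1 x = indicator {0<..1} x * ((phi c d x - 1) / x)" for x
  define f2 where "f2 x = indicator {1..} x * (phi c d x / x)" for x
  have P: "pf_H_over_x (phi c d) = (\<integral>x. f1 x \<partial>lborel) + (\<integral>x. f2 x \<partial>lborel)"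
    by (simp add: pf_H_over_x_def set_lebesgue_integral_def f1_def f2_def p0)
  have f1b: "- (indicator {c..1} x * (1/c)) \<le> f1 x \<and> f1 x \<le> 0" for x
  proof (cases "0 < x \<and> x \<le> 1")
    case True
    have b: "0 \<le> phi c d x" "phi c d x \<le> 1" using phi_bounds[OF c(1,3)] True by auto
    show ?thesis
    proof (cases "x \<le> c")
      case True2: True
      then have "phi c d x = 1" using phi_one[OF c(1,3)] True by auto
      then show ?thesis using True True2 c by (simp add: f1_def indicator_def)
    next
      case False
      have "(-1)/x \<le> (phi c d x - 1)/x" by (rule divide_right_mono) (use True b in auto)
      moreover have "-(1/c) \<le> -1/x" using False c True by (simp add: frac_le)
      moreover have "(phi c d x - 1)/x \<le> 0" using True b by (simp add: divide_nonpos_pos)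
      ultimately show ?thesis using True False by (simp add: f1_def indicator_def)
    qed
  qed (use c in \<open>auto simp: f1_def indicator_def\<close>)
  have f2b: "0 \<le> f2 x \<and> f2 x \<le> indicator {1..d} x * 1" for x
  proof (cases "1 \<le> x")
    case True
    have b: "0 \<le> phi c d x" "phi c d x \<le> 1" using phi_bounds[OF c(1,3)] True by auto
    show ?thesis
    proof (cases "x \<le> d")
      case True2: True
      have "phi c d x / x \<le> 1" using b True by (simp add: divide_le_eq_1)
      then show ?thesis using True True2 b by (simp add: f2_def indicator_def)
    next
      case False
      then have "phi c d x = 0" using phi_zero_hi[OF c(1,3)] by auto
      then show ?thesis using True False by (simp add: f2_def indicator_def)
    qed
  qed (simp add: f2_def indicator_def)
  have m1: "f1 \<in> borel_measurable lborel"
    unfolding f1_def[abs_def] using phi_meas[OF c(3)] by measurable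
  have m2: "f2 \<in> borel_measurable lborel"
    unfolding f2_def[abs_def] using phi_meas[OF c(3)] by measurable
  note I1 = int_ind_const[of c 1 "1/c", OF c(2)] and I2 = int_ind_const[of 1 d 1, OF c(4)]
  have i1: "integrable lborel f1"
  proof (rule Bochner_Integration.integrable_bound[OF I1(1) m1], rule AE_I2)
    fix x show "norm (f1 x) \<le> norm (indicator {c..1} x * (1/c))"
      using f1b[of x] c by (cases "x \<in> {c..1}") (auto simp: indicator_def abs_le_iff)
  qed
  have i2: "integrable lborel f2"
  proof (rule Bochner_Integration.integrable_bound[OF I2(1) m2], rule AE_I2)
    fix x show "norm (f2 x) \<le> norm (indicator {1..d} x * (1::real))"
      using f2b[of x] c by (cases "x \<in> {1..d}") (auto simp: indicator_def abs_le_iff)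
  qed
  have "(\<integral>x. - (indicator {c..1} x * (1/c)) \<partial>lborel) \<le> (\<integral>x. f1 x \<partial>lborel)"
    by (rule integral_mono) (use i1 I1 c f1b in auto)
  then have a1: "-((1-c)/c) \<le> (\<integral>x. f1 x \<partial>lborel)" using I1(2) c by simp
  have a2: "(\<integral>x. f1 x \<partial>lborel) \<le> 0"
    using integral_mono[OF i1 integrable_zero, of ] f1b by simp
  have a3: "0 \<le> (\<integral>x. f2 x \<partial>lborel)"
    using integral_mono[OF integrable_zero i2] f2b by simp
  have "(\<integral>x. f2 x \<partial>lborel) \<le> (\<integral>x. indicator {1..d} x * 1 \<partial>lborel)"
    by (rule integral_mono) (use i2 I2 c f2b in auto)
  then have a4: "(\<integral>x. f2 x \<partial>lborel) \<le> d - 1" using I2(2) c by simp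
  show "-((1-c)/c) \<le> pf_H_over_x (phi c d)" "pf_H_over_x (phi c d) \<le> d - 1"
    using a1 a2 a3 a4 P by linarith+
qed

lemma key_H:
  fixes s :: "real \<Rightarrow> real"
  assumes supp: "\<forall>x<0. s x = 0" and cd: "0 < c" "c < d" and l: "0 < l"
  shows "l * dilate (dderiv (distr_of s)) l (phi c d)
         = (\<integral>x. s x * psi c d (x/l) \<partial>lborel) / (l * Phi c d d)"
proof -
  have J: "0 < Phi c d d" by (rule Phi_pos) (use cd in auto)
  have dv: "deriv (\<lambda>x. phi c d (x/l)) = (\<lambda>x. kk c d (x/l) / l)"
  proof (rule ext, rule DERIV_imp_deriv)
    fix x
    have "((\<lambda>x. x/l) has_real_derivative 1/l) (at x)"
      using DERIV_cdivide[OF DERIV_ident, of l] by simp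
    from DERIV_chain2[OF phi_deriv[OF cd(2)] this]
    show "((\<lambda>x. phi c d (x/l)) has_real_derivative kk c d (x/l)/l) (at x)" by simp
  qed
  have pw: "s x * (kk c d (x/l) / l) = - (s x * psi c d (x/l)) / (l * Phi c d d)" for x
  proof (cases "x < 0")
    case True
    then show ?thesis using supp by simp
  next
    case False
    then have "0 \<le> x/l" using l by simp
    then have "kk c d (x/l) = - psi c d (x/l) / Phi c d d" by (rule kk_pos_side[OF cd])
    then show ?thesis using l J by (simp add: field_simps)
  qed
  show ?thesis
    unfolding dilate_def dderiv_def distr_of_def dv pw
    using l J by (simp add: field_simps)
qed

lemma affine_psi:
  assumes cd: "c < d" and l: "0 < l"
  shows "integrable lborel (\<lambda>x. psi c d (x/l))" "(\<integral>x. psi c d (x/l) \<partial>lborel) = l * Phi c d d"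
proof -
  have "integrable lborel (\<lambda>x. psi c d (0 + (1/l) * x))"
    using lborel_integrable_real_affine[OF psi_lborel(1)[OF cd], of "1/l" 0] l by simp
  then show "integrable lborel (\<lambda>x. psi c d (x/l))" by simp
  have "(\<integral>x. psi c d (x/l) \<partial>lborel) = \<bar>l\<bar> *\<^sub>R (\<integral>x. psi c d ((0 + l * x)/l) \<partial>lborel)"
    by (rule lborel_integral_real_affine) (use l in simp)
  also have "\<dots> = l * Phi c d d" using l psi_lborel(2)[OF cd] by simp
  finally show "(\<integral>x. psi c d (x/l) \<partial>lborel) = l * Phi c d d" .
qed

lemma key_bounds:
  fixes s :: "real \<Rightarrow> real"
  assumes loc: "locally_integrable_fun s"
    and mono: "mono_on {B..} (\<lambda>x. s x + A * ln x)" and A: "0 \<le> A"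
    and cd: "0 < c" "c < d" and l: "0 < l" and Bl: "B \<le> l * c"
  shows "(s (l*c) - A * ln (d/c)) * (l * Phi c d d) \<le> (\<integral>x. s x * psi c d (x/l) \<partial>lborel)"
    "(\<integral>x. s x * psi c d (x/l) \<partial>lborel) \<le> (s (l*d) + A * ln (d/c)) * (l * Phi c d d)"
proof -
  define S where "S = {l*c..l*d}"
  have si: "set_integrable lborel S s"
    using loc unfolding locally_integrable_fun_def S_def by (simp add: compact_Icc)
  then have i0: "integrable lborel (\<lambda>x. indicator S x * s x)"
    by (simp add: set_integrable_def)
  have nz: "l*c < x \<and> x < l*d" if "psi c d (x/l) \<noteq> 0" for x
  proof -
    have "c < x/l \<and> x/l < d" using psi_zero[OF cd(2)] that by blast
    then show ?thesis using l by (simp add: field_simps)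
  qed
  have eqf: "s x * psi c d (x/l) = (indicator S x * s x) * psi c d (x/l)" for x
    using nz[of x] by (cases "psi c d (x/l) = 0") (auto simp: S_def indicator_def)
  have mpsi: "(\<lambda>x. psi c d (x/l)) \<in> borel_measurable lborel"
    using borel_measurable_integrable[OF affine_psi(1)[OF cd(2) l]] .
  have mf: "(\<lambda>x. s x * psi c d (x/l)) \<in> borel_measurable lborel"
    unfolding eqf using borel_measurable_integrable[OF i0] mpsi by measurable
  have if0: "integrable lborel (\<lambda>x. s x * psi c d (x/l))"
  proof (rule Bochner_Integration.integrable_bound[OF i0 mf], rule AE_I2)
    fix x
    have "\<bar>psi c d (x/l)\<bar> \<le> 1" using psi_nonneg[OF cd(2)] psi_le1[OF cd(2)] by (simp add: abs_le_iff)
    then have "\<bar>indicator S x * s x\<bar> * \<bar>psi c d (x/l)\<bar> \<le> \<bar>indicator S x * s x\<bar>"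
      by (simp add: mult_left_le)
    then show "norm (s x * psi c d (x/l)) \<le> norm (indicator S x * s x)"
      by (subst eqf) (simp add: abs_mult)
  qed
  have lnb: "ln x - ln (l*c) \<le> ln (d/c)" "ln (l*d) - ln x \<le> ln (d/c)"
    if "l*c < x" "x < l*d" for x
  proof -
    have x0: "0 < x" using that cd l by (meson less_trans mult_pos_pos)
    have "ln x - ln (l*c) = ln (x/(l*c))" using x0 cd l by (simp add: ln_div)
    also have "\<dots> \<le> ln (d/c)"
      using that x0 cd l by (subst ln_le_cancel_iff) (auto simp: field_simps)
    finally show "ln x - ln (l*c) \<le> ln (d/c)" .
    have "ln (l*d) - ln x = ln ((l*d)/x)" using x0 cd l by (simp add: ln_div)
    also have "\<dots> \<le> ln (d/c)"
      using that x0 cd l by (subst ln_le_cancel_iff) (auto simp: field_simps)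
    finally show "ln (l*d) - ln x \<le> ln (d/c)" .
  qed
  have sb: "s (l*c) - A * ln (d/c) \<le> s x \<and> s x \<le> s (l*d) + A * ln (d/c)"
    if "l*c < x" "x < l*d" for x
  proof -
    have B1: "B \<le> l*c" "B \<le> x" "B \<le> l*d" using Bl that by auto
    have m1: "s (l*c) + A * ln (l*c) \<le> s x + A * ln x"
      by (rule mono_onD[OF mono]) (use B1 that in auto)
    have m2: "s x + A * ln x \<le> s (l*d) + A * ln (l*d)"
      by (rule mono_onD[OF mono]) (use B1 that in auto)
    have "A * (ln x - ln (l*c)) \<le> A * ln (d/c)" "A * (ln (l*d) - ln x) \<le> A * ln (d/c)"
      using lnb[OF that] A by (auto intro: mult_left_mono)
    then show ?thesis using m1 m2 by (simp add: algebra_simps)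
  qed
  have J: "(\<integral>x. K * psi c d (x/l) \<partial>lborel) = K * (l * Phi c d d)" for K
    using affine_psi(2)[OF cd(2) l] by simp
  have iK: "integrable lborel (\<lambda>x. K * psi c d (x/l))" for K
    using affine_psi(1)[OF cd(2) l] by simp
  have "(\<integral>x. (s (l*c) - A * ln (d/c)) * psi c d (x/l) \<partial>lborel) \<le> (\<integral>x. s x * psi c d (x/l) \<partial>lborel)"
  proof (rule integral_mono[OF iK if0])
    fix x
    show "(s (l*c) - A * ln (d/c)) * psi c d (x/l) \<le> s x * psi c d (x/l)"
    proof (cases "psi c d (x/l) = 0")
      case False
      then have h: "l*c < x" "x < l*d" using nz by blast+
      show ?thesis using sb[OF h] psi_nonneg[OF cd(2)]
        by (intro mult_right_mono) auto
    qed simp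
  qed
  then show "(s (l*c) - A * ln (d/c)) * (l * Phi c d d) \<le> (\<integral>x. s x * psi c d (x/l) \<partial>lborel)"
    by (simp only: J)
  have "(\<integral>x. s x * psi c d (x/l) \<partial>lborel) \<le> (\<integral>x. (s (l*d) + A * ln (d/c)) * psi c d (x/l) \<partial>lborel)"
  proof (rule integral_mono[OF if0 iK])
    fix x
    show "s x * psi c d (x/l) \<le> (s (l*d) + A * ln (d/c)) * psi c d (x/l)"
    proof (cases "psi c d (x/l) = 0")
      case False
      then have h: "l*c < x" "x < l*d" using nz by blast+
      show ?thesis using sb[OF h] psi_nonneg[OF cd(2)]
        by (intro mult_right_mono) auto
    qed simp
  qed
  then show "(\<integral>x. s x * psi c d (x/l) \<partial>lborel) \<le> (s (l*d) + A * ln (d/c)) * (l * Phi c d d)"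
    by (simp only: J)
qed



lemma Hlim:
  fixes s :: "real \<Rightarrow> real"
  assumes supp: "\<forall>x<0. s x = 0"
    and asym: "\<forall>\<phi>. schwartz \<phi> \<longrightarrow>
       ((\<lambda>l. l * (dilate (dderiv (distr_of s)) l \<phi>
              - (a * dirac \<phi> / l + b * (ln l / l) * dirac \<phi> + (b / l) * pf_H_over_x \<phi>)))
        \<longlongrightarrow> 0) at_top"
    and cd: "0 < c" "c < d" "c \<le> 1"
  shows "((\<lambda>l. (\<integral>x. s x * psi c d (x/l) \<partial>lborel) / (l * Phi c d d)
              - a - b * ln l - b * pf_H_over_x (phi c d)) \<longlongrightarrow> 0) at_top"
proof -
  have lim: "((\<lambda>l. l * (dilate (dderiv (distr_of s)) l (phi c d)
              - (a * dirac (phi c d) / l + b * (ln l / l) * dirac (phi c d) + (b / l) * pf_H_over_x (phi c d))))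
        \<longlongrightarrow> 0) at_top"
    using asym phi_schwartz[OF cd(1,2)] by blast
  have d1: "dirac (phi c d) = 1" unfolding dirac_def by (rule phi_one) (use cd in auto)
  have "eventually (\<lambda>l. l * (dilate (dderiv (distr_of s)) l (phi c d)
              - (a * dirac (phi c d) / l + b * (ln l / l) * dirac (phi c d) + (b / l) * pf_H_over_x (phi c d)))
        = (\<integral>x. s x * psi c d (x/l) \<partial>lborel) / (l * Phi c d d)
              - a - b * ln l - b * pf_H_over_x (phi c d)) at_top"
    using eventually_gt_at_top[of 0]
  proof eventually_elim
    case (elim l)
    have "l * (dilate (dderiv (distr_of s)) l (phi c d)
              - (a * dirac (phi c d) / l + b * (ln l / l) * dirac (phi c d) + (b / l) * pf_H_over_x (phi c d)))
         = l * dilate (dderiv (distr_of s)) l (phi c d) - (a + b * ln l + b * pf_H_over_x (phi c d))"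
      using elim d1 by (simp add: field_simps)
    then show ?case using key_H[OF supp cd(1,2) elim] by simp
  qed
  then show ?thesis using lim by (rule Lim_transform_eventually[rotated])
qed

theorem proposition3p4:
  fixes s :: "real \<Rightarrow> real" and a b A B :: real
  assumes loc: "locally_integrable_fun s"
    and supp: "\<forall>x<0. s x = 0"
    and tempered: "\<forall>\<phi>. schwartz \<phi> \<longrightarrow> integrable lborel (\<lambda>x. s x * \<phi> x)"
    and AB: "A > 0" "B > 0"
    and mono: "mono_on {B..} (\<lambda>x. s x + A * ln x)"
    and asym: "\<forall>\<phi>. schwartz \<phi> \<longrightarrow>
       ((\<lambda>l. l * (dilate (dderiv (distr_of s)) l \<phi>
              - (a * dirac \<phi> / l + b * (ln l / l) * dirac \<phi> + (b / l) * pf_H_over_x \<phi>)))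
        \<longlongrightarrow> 0) at_top"
  shows "((\<lambda>x. s x - b * ln x) \<longlongrightarrow> a) at_top"
proof (rule tendstoI)
  fix e :: real assume e: "0 < e"
  define \<delta> where "\<delta> = e / (4 * (\<bar>b\<bar> + A + 1))"
  have \<delta>: "0 < \<delta>" using e AB by (simp add: \<delta>_def)
  define \<beta> where "\<beta> = 1 + \<delta>"
  have \<beta>: "1 < \<beta>" using \<delta> by (simp add: \<beta>_def)
  have lnb: "ln \<beta> \<le> \<delta>" unfolding \<beta>_def using \<delta> by (simp add: ln_add_one_self_le_self)
  have small: "\<bar>b\<bar> * \<delta> + A * \<delta> \<le> e / 4"
  proof -
    have "(\<bar>b\<bar> + A) * \<delta> \<le> (\<bar>b\<bar> + A + 1) * \<delta>" using \<delta> by simp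
    also have "\<dots> = e / 4" using AB by (simp add: \<delta>_def field_simps)
    finally show ?thesis by (simp add: algebra_simps)
  qed
  have Alnb: "A * ln \<beta> \<le> A * \<delta>" using lnb AB by simp
  have c1: "0 < (1::real)" "1 < \<beta>" "(1::real) \<le> 1" using \<beta> by auto
  have c2: "0 < 1/\<beta>" "1/\<beta> < 1" "1/\<beta> \<le> 1" using \<beta> by auto
  note L1 = Hlim[OF supp asym c1]
  note L2 = Hlim[OF supp asym c2]
  have pf1: "0 \<le> pf_H_over_x (phi 1 \<beta>)" "pf_H_over_x (phi 1 \<beta>) \<le> \<delta>"
    using pf_bounds[of 1 \<beta>] \<beta> by (auto simp: \<beta>_def)
  have q: "(1 - 1/\<beta>)/(1/\<beta>) = \<delta>" using \<beta> by (simp add: \<beta>_def field_simps)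
  have pf2: "- \<delta> \<le> pf_H_over_x (phi (1/\<beta>) 1)" "pf_H_over_x (phi (1/\<beta>) 1) \<le> 0"
    using pf_bounds[of "1/\<beta>" 1] \<beta> q by auto
  have "\<bar>pf_H_over_x (phi 1 \<beta>)\<bar> \<le> \<delta>" using pf1 by auto
  then have bp1: "\<bar>b * pf_H_over_x (phi 1 \<beta>)\<bar> \<le> \<bar>b\<bar> * \<delta>"
    unfolding abs_mult by (rule mult_left_mono) simp
  have "\<bar>pf_H_over_x (phi (1/\<beta>) 1)\<bar> \<le> \<delta>" using pf2 by auto
  then have bp2: "\<bar>b * pf_H_over_x (phi (1/\<beta>) 1)\<bar> \<le> \<bar>b\<bar> * \<delta>"
    unfolding abs_mult by (rule mult_left_mono) simp
  have e4: "0 < e/4" using e by simp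
  note ev1 = order_tendstoD(2)[OF tendsto_rabs_zero[OF L1] e4]
  note ev2 = order_tendstoD(2)[OF tendsto_rabs_zero[OF L2] e4]
  show "eventually (\<lambda>x. dist (s x - b * ln x) a < e) at_top"
    using ev1 ev2 eventually_gt_at_top[of "max 1 (B*\<beta>)"]
  proof eventually_elim
    case (elim l)
    have l: "0 < l" using elim by simp
    have Bb: "B * \<beta> < l" using elim by simp
    have "B * 1 \<le> B * \<beta>" using AB \<beta> by (intro mult_left_mono) auto
    then have Bl1: "B \<le> l * 1" using Bb by simp
    note Bb
    then have Bl2: "B \<le> l * (1/\<beta>)" using \<beta> by (simp add: field_simps)
    define J1 where "J1 = Phi 1 \<beta> \<beta>"
    define J2 where "J2 = Phi (1/\<beta>) 1 1"
    have J1: "0 < J1" unfolding J1_def by (rule Phi_pos) (use \<beta> in simp)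
    have J2: "0 < J2" unfolding J2_def by (rule Phi_pos) (use c2 in simp)
    define I1 where "I1 = (\<integral>x. s x * psi 1 \<beta> (x/l) \<partial>lborel)"
    define I2 where "I2 = (\<integral>x. s x * psi (1/\<beta>) 1 (x/l) \<partial>lborel)"
    have k1: "(s l - A * ln \<beta>) * (l * J1) \<le> I1"
      using key_bounds(1)[OF loc mono _ c1(1,2) l Bl1] AB by (simp add: J1_def I1_def)
    have k2: "I2 \<le> (s l + A * ln \<beta>) * (l * J2)"
      using key_bounds(2)[OF loc mono _ c2(1,2) l Bl2] AB \<beta> by (simp add: J2_def I2_def)
    have h1: "s l - A * ln \<beta> \<le> I1 / (l * J1)"
      using k1 l J1 by (simp add: pos_le_divide_eq)
    have h2: "I2 / (l * J2) \<le> s l + A * ln \<beta>"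
      using k2 l J2 by (simp add: pos_divide_le_eq)
    have E1: "\<bar>I1 / (l * J1) - a - b * ln l - b * pf_H_over_x (phi 1 \<beta>)\<bar> < e/4"
      using elim(1) by (simp add: I1_def J1_def)
    have E2: "\<bar>I2 / (l * J2) - a - b * ln l - b * pf_H_over_x (phi (1/\<beta>) 1)\<bar> < e/4"
      using elim(2) by (simp add: I2_def J2_def)
    have up: "s l - b * ln l - a < e/2"
      using h1 E1 bp1 Alnb small unfolding abs_less_iff abs_le_iff by linarith
    have lo: "- (e/2) < s l - b * ln l - a"
      using h2 E2 bp2 Alnb small unfolding abs_less_iff abs_le_iff by linarith
    show ?case using up lo e by (simp add: dist_real_def abs_less_iff)
  qed
qed

end
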